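(* Let $d\ge 2$ and let $\mathcal{S}^{(d)}_2$ be the complementary channel of the $1\to 2$ universal qudit cloner. Then the following operators form a set of rank-one Kraus operators for $\mathcal{S}^{(d)}_2$: $$\tfrac{1}{\sqrt{d+1}}|1\rangle\langle1|,\ \dots,\ \tfrac{1}{\sqrt{d+1}}|d\rangle\langle d|,\qquad \tfrac{1}{\sqrt{4^{d-1}(d+1)}}\,|\psi(\vec n)\rangle\langle\psi(\vec n)|\,\sigma_z(\vec n),$$ where $|\psi(\vec n)\rangle=\sum_{j=1}^d i^{n_j}|j\rangle$, $\sigma_z(\vec n)=\sum_{j=1}^d(-1)^{n_j}|j\rangle\langle j|$, and $\vec n=(n_1,\dots,n_d)$ ranges over all vectors with $n_1=0$ and $n_j\in\{0,1,2,3\}$ for $j\ge2$ (here $i=\sqrt{-1}$). That is, $\mathcal{S}^{(d)}_2(\rho)=\sum_m E_m\rho E_m^\dagger$ and $\sum_m E_m^\dagger E_m=I$ for this family $\{E_m\}$.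
   Context: The $1\to 2$ universal qudit cloner is the isometry $|l\rangle\otimes R\mapsto\sum_{j=1}^d\sqrt{\tfrac{1+\delta_{lj}}{d+1}}\,|\vec e_l+\vec e_j\rangle\otimes R_j$, where $|\vec m\rangle$ is the normalized completely symmetric two-qudit state with occupation vector $\vec m$ and $\{R_j\}_{j=1}^d$ are orthonormal auxiliary (environment) states. Its complementary channel $\mathcal{S}^{(d)}_2$ is obtained by applying the isometry and tracing out the two-qudit clone system; the environment is identified with $\mathbb{C}^d$ via $R_j\leftrightarrow|j\rangle$. With this identification $\mathcal{S}^{(d)}_2(\rho)=\frac{1}{d+1}\big(\mathrm{Tr}(\rho)I+\rho^{T}\big)$, the transpose taken in the basis $\{|j\rangle\}$. *)

theory Defs
  imports Complex_Main
begin

text \<open>Conventions: d x d complex matrices are functions nat => nat => complex,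
  indices range over {1..d}; entries outside this range are irrelevant.
  The two-qudit clone space has basis |a>|b> (a,b in {1..d}); the environment
  is identified with C^d via R_k <-> |k>.\<close>

definition mmult :: "nat \<Rightarrow> (nat \<Rightarrow> nat \<Rightarrow> complex) \<Rightarrow> (nat \<Rightarrow> nat \<Rightarrow> complex) \<Rightarrow> nat \<Rightarrow> nat \<Rightarrow> complex" where
  "mmult d A B i k = (\<Sum>j\<in>{1..d}. A i j * B j k)"

definition adj :: "(nat \<Rightarrow> nat \<Rightarrow> complex) \<Rightarrow> nat \<Rightarrow> nat \<Rightarrow> complex" where
  "adj A i j = cnj (A j i)"

definition idm :: "nat \<Rightarrow> nat \<Rightarrow> complex" where
  "idm i j = (if i = j then 1 else 0)"

text \<open>Component (a,b) of the normalized completely symmetric two-qudit state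
  with occupation vector e_l + e_j.\<close>
definition sym_state :: "nat \<Rightarrow> nat \<Rightarrow> nat \<Rightarrow> nat \<Rightarrow> complex" where
  "sym_state l j a b =
     (if l = j then (if a = l \<and> b = l then 1 else 0)
      else (if (a = l \<and> b = j) \<or> (a = j \<and> b = l) then complex_of_real (1 / sqrt 2) else 0))"

text \<open>Matrix of the 1->2 universal cloner isometry: row index (a,b,k) with (a,b) the
  clone system and k the environment label, column index l (input).\<close>
definition cloner_iso :: "nat \<Rightarrow> nat \<times> nat \<times> nat \<Rightarrow> nat \<Rightarrow> complex" where
  "cloner_iso d abk l = (case abk of (a, b, k) \<Rightarrow>
     complex_of_real (sqrt ((1 + (if l = k then 1 else 0)) / (real d + 1))) * sym_state l k a b)"

definition compl_S2 :: "nat \<Rightarrow> (nat \<Rightarrow> nat \<Rightarrow> complex) \<Rightarrow> nat \<Rightarrow> nat \<Rightarrow> complex" where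
  "compl_S2 d \<rho> k k' =
     (\<Sum>a\<in>{1..d}. \<Sum>b\<in>{1..d}. \<Sum>l\<in>{1..d}. \<Sum>l'\<in>{1..d}.
        cloner_iso d (a, b, k) l * \<rho> l l' * cnj (cloner_iso d (a, b, k') l'))"

definition kraus_diag :: "nat \<Rightarrow> nat \<Rightarrow> nat \<Rightarrow> nat \<Rightarrow> complex" where
  "kraus_diag d j a b = (if a = j \<and> b = j then complex_of_real (1 / sqrt (real d + 1)) else 0)"

definition psi :: "(nat \<Rightarrow> nat) \<Rightarrow> nat \<Rightarrow> complex" where
  "psi n j = \<i> ^ n j"

definition sigma_z :: "(nat \<Rightarrow> nat) \<Rightarrow> nat \<Rightarrow> nat \<Rightarrow> complex" where
  "sigma_z n a b = (if a = b then (-1) ^ n a else 0)"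

definition kraus_vec :: "nat \<Rightarrow> (nat \<Rightarrow> nat) \<Rightarrow> nat \<Rightarrow> nat \<Rightarrow> complex" where
  "kraus_vec d n =
     mmult d (\<lambda>a b. complex_of_real (1 / sqrt (4 ^ (d - 1) * (real d + 1))) * psi n a * cnj (psi n b))
             (sigma_z n)"

definition vec_set :: "nat \<Rightarrow> (nat \<Rightarrow> nat) set" where
  "vec_set d = {n. (\<forall>j. j \<notin> {2..d} \<longrightarrow> n j = 0) \<and> (\<forall>j. n j < 4)}"

end

theory Submission
  imports Defs
begin


lemma vec_set_1: "vec_set (Suc 0) = {\<lambda>_. 0}"
  by (auto simp: vec_set_def)

lemma vec_set_Suc:
  assumes "d \<ge> 1"
  shows "vec_set (Suc d) = (\<lambda>(n,t). n(Suc d := t)) ` (vec_set d \<times> {..<4})"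
proof
  show "(\<lambda>(n,t). n(Suc d := t)) ` (vec_set d \<times> {..<4}) \<subseteq> vec_set (Suc d)"
    using assms by (auto simp: vec_set_def)
next
  show "vec_set (Suc d) \<subseteq> (\<lambda>(n,t). n(Suc d := t)) ` (vec_set d \<times> {..<4})"
  proof
    fix m assume m: "m \<in> vec_set (Suc d)"
    have "m = (\<lambda>(n,t). n(Suc d := t)) (m(Suc d := 0), m (Suc d))" by auto
    moreover have "(m(Suc d := 0), m (Suc d)) \<in> vec_set d \<times> {..<4}"
      using m by (auto simp: vec_set_def)
    ultimately show "m \<in> (\<lambda>(n,t). n(Suc d := t)) ` (vec_set d \<times> {..<4})" by blast
  qed
qed

lemma vec_set_inj:
  "inj_on (\<lambda>(n,t). n(Suc d := t)) (vec_set d \<times> {..<4})"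
proof (rule inj_onI, clarify)
  fix n t n' t'
  assume a: "n \<in> vec_set d" "n' \<in> vec_set d" and e: "n(Suc d := t) = n'(Suc d := t')"
  have "n (Suc d) = 0" "n' (Suc d) = 0" using a by (auto simp: vec_set_def)
  then show "n = n' \<and> t = t'" using e
    by (metis fun_upd_idem fun_upd_upd fun_upd_same)
qed

lemma vec_set_finite: "d \<ge> 1 \<Longrightarrow> finite (vec_set d)"
proof (induction d rule: dec_induct)
  case base then show ?case by (simp add: vec_set_1)
next
  case (step d) then show ?case by (simp add: vec_set_Suc)
qed

lemma i_pow_mod: "\<i> ^ m = \<i> ^ (m mod 4)"
proof -
  have "\<i> ^ m = \<i> ^ (4 * (m div 4) + m mod 4)" by simp
  also have "\<dots> = (\<i>^4) ^ (m div 4) * \<i> ^ (m mod 4)" by (simp only: power_add power_mult)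
  also have "(\<i>::complex)^4 = 1" by (simp add: numeral_eq_Suc)
  finally show ?thesis by simp
qed

lemma sum4: "(\<Sum>t<4. (z::complex) ^ t) = 1 + z + z^2 + z^3"
proof -
  have "{..<4::nat} = {0,1,2,3}" by auto
  then show ?thesis by simp
qed

lemma S4: "(\<Sum>t<4. \<i> ^ (m * t)) = (if 4 dvd m then 4 else (0::complex))"
proof -
  have e: "(\<Sum>t<4. \<i> ^ (m * t)) = (\<Sum>t<4. (\<i> ^ (m mod 4)) ^ t)"
    by (simp add: power_mult i_pow_mod[of m, symmetric])
  have "m mod 4 < 4" by simp
  then have "m mod 4 = 0 \<or> m mod 4 = 1 \<or> m mod 4 = 2 \<or> m mod 4 = 3" by linarith
  then show ?thesis unfolding e sum4
    apply (elim disjE)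
    apply (simp_all add: dvd_eq_mod_eq_0 power2_eq_square power3_eq_cube)
    done
qed

lemma G:
  assumes "d \<ge> 1"
  shows "(\<Sum>n\<in>vec_set d. \<i> ^ (\<Sum>j\<in>{2..d}. m j * n j)) =
          (if \<forall>j\<in>{2..d}. 4 dvd m j then 4 ^ (d - 1) else (0::complex))"
  using assms
proof (induction d rule: dec_induct)
  case base then show ?case by (simp add: vec_set_1)
next
  case (step d)
  have fin: "finite (vec_set d)" using step(1) by (rule vec_set_finite)
  have iv: "{2..Suc d} = insert (Suc d) {2..d}" using step(1) by auto
  have "(\<Sum>n\<in>vec_set (Suc d). \<i> ^ (\<Sum>j\<in>{2..Suc d}. m j * n j))
     = (\<Sum>(n,t)\<in>vec_set d \<times> {..<4}. \<i> ^ (\<Sum>j\<in>{2..d}. m j * n j) * \<i> ^ (m (Suc d) * t))"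
  proof -
    have pw: "\<i> ^ (\<Sum>j\<in>{2..Suc d}. m j * (n(Suc d := t)) j) = \<i> ^ (\<Sum>j\<in>{2..d}. m j * n j) * \<i> ^ (m (Suc d) * t)" for n t
    proof -
      have "(\<Sum>j\<in>{2..d}. m j * (n(Suc d := t)) j) = (\<Sum>j\<in>{2..d}. m j * n j)"
        by (rule sum.cong) auto
      then show ?thesis by (simp add: iv power_add)
    qed
    show ?thesis
      unfolding vec_set_Suc[OF step(1)] sum.reindex[OF vec_set_inj] o_def
      by (rule sum.cong[OF refl]) (simp only: split_paired_all prod.case pw)
  qed
  also have "\<dots> = (\<Sum>n\<in>vec_set d. \<i> ^ (\<Sum>j\<in>{2..d}. m j * n j)) * (\<Sum>t<4. \<i> ^ (m (Suc d) * t))"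
    by (simp add: sum_product sum.cartesian_product)
  also have "\<dots> = (if \<forall>j\<in>{2..Suc d}. 4 dvd m j then 4 ^ (Suc d - 1) else 0)"
  proof -
    have p: "(4::complex)^(d-1)*4 = 4^d" using step(1)
      by (metis Suc_diff_1 less_eq_Suc_le power_Suc2 One_nat_def)
    show ?thesis using p by (auto simp: step(3) S4 iv)
  qed
  finally show ?case .
qed



lemma dvd4: "x \<le> 2 \<Longrightarrow> y \<le> 2 \<Longrightarrow> 4 dvd (x + 3*y::nat) \<longleftrightarrow> x = y"
proof -
  assume "x \<le> 2" "y \<le> 2"
  then have "x=0\<or>x=1\<or>x=2" "y=0\<or>y=1\<or>y=2" by auto
  then show ?thesis by (elim disjE) auto
qed

lemma fin4:
  fixes a b c e :: nat
  assumes 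
   Ha: "a=1 \<or> 1 + (if a=b then 1 else 0) = (if a=c then 1 else 0) + (if a=e then (1::nat) else 0)"
  and Hb: "b=1 \<or> (if b=a then 1 else 0) + 1 = (if b=c then 1 else 0) + (if b=e then (1::nat) else 0)"
  and Hc: "c=1 \<or> (if c=a then 1 else 0) + (if c=b then 1 else 0) = 1 + (if c=e then (1::nat) else 0)"
  and He: "e=1 \<or> (if e=a then 1 else 0) + (if e=b then 1 else 0) = (if e=c then 1 else 0) + (1::nat)"
  shows "(a=c\<and>b=e)\<or>(a=e\<and>b=c)"
  using assms by (auto split: if_splits)

lemma cond4:
  fixes a b c e :: nat
  assumes r: "a \<in> {1..d}" "b \<in> {1..d}" "c \<in> {1..d}" "e \<in> {1..d}"
  and m: "\<And>j. m j = ((if j=a then 1 else 0) + (if j=b then 1 else 0)) + 3 * ((if j=c then 1 else 0) + (if j=e then (1::nat) else 0))"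
  shows "(\<forall>j\<in>{2..d}. 4 dvd m j) \<longleftrightarrow> (a=c\<and>b=e)\<or>(a=e\<and>b=c)"
proof
  assume "(a=c\<and>b=e)\<or>(a=e\<and>b=c)"
  then show "\<forall>j\<in>{2..d}. 4 dvd m j" unfolding m by auto
next
  assume h: "\<forall>j\<in>{2..d}. 4 dvd m j"
  have key: "j \<in> {2..d} \<Longrightarrow> (if j=a then 1 else 0) + (if j=b then 1 else 0) = (if j=c then 1 else 0) + (if j=e then (1::nat) else 0)" for j
  proof -
    assume "j \<in> {2..d}"
    then have "4 dvd m j" using h by blast
    then show ?thesis unfolding m by (subst (asm) dvd4) auto
  qed
  show "(a=c\<and>b=e)\<or>(a=e\<and>b=c)"
  proof (rule fin4)
    show "a=1 \<or> 1 + (if a=b then 1 else 0) = (if a=c then 1 else 0) + (if a=e then (1::nat) else 0)"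
      using key[of a] r by (cases "a = 1") auto
    show "b=1 \<or> (if b=a then 1 else 0) + 1 = (if b=c then 1 else 0) + (if b=e then (1::nat) else 0)"
      using key[of b] r by (cases "b = 1") auto
    show "c=1 \<or> (if c=a then 1 else 0) + (if c=b then 1 else 0) = 1 + (if c=e then (1::nat) else 0)"
      using key[of c] r by (cases "c = 1") auto
    show "e=1 \<or> (if e=a then 1 else 0) + (if e=b then 1 else 0) = (if e=c then 1 else 0) + (1::nat)"
      using key[of e] r by (cases "e = 1") auto
  qed
qed

lemma cnj_ipow: "cnj (\<i> ^ x) = \<i> ^ (3 * x)"
proof -
  have "(\<i>::complex) ^ 3 = - \<i>" by (simp add: power3_eq_cube)
  then show ?thesis by (simp add: power_mult)
qed

lemma CH:
  assumes d: "d \<ge> 1" and r: "a \<in> {1..d}" "b \<in> {1..d}" "c \<in> {1..d}" "e \<in> {1..d}"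
  shows "(\<Sum>n\<in>vec_set d. \<i> ^ n a * \<i> ^ n b * cnj (\<i> ^ n c) * cnj (\<i> ^ n e)) =
         (if (a=c\<and>b=e)\<or>(a=e\<and>b=c) then 4 ^ (d - 1) else 0)"
proof -
  define m where "m j = ((if j=a then 1 else 0) + (if j=b then 1 else 0)) + 3 * ((if j=c then 1 else 0) + (if j=e then (1::nat) else 0))" for j
  have pw: "\<i> ^ n a * \<i> ^ n b * cnj (\<i> ^ n c) * cnj (\<i> ^ n e) = \<i> ^ (\<Sum>j\<in>{2..d}. m j * n j)"
    if n: "n \<in> vec_set d" for n
  proof -
    have n1: "n 1 = 0" using n by (auto simp: vec_set_def)
    have s1: "{1..d} = insert 1 {2..d}" using d by auto
    have "(\<Sum>j\<in>{1..d}. m j * n j) = (\<Sum>j\<in>{2..d}. m j * n j)"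
      unfolding s1 using n1 by simp
    moreover have "(\<Sum>j\<in>{1..d}. m j * n j) = (\<Sum>j\<in>{1..d}. (if j=a then n j else 0) + (if j=b then n j else 0) + (if j=c then 3 * n j else 0) + (if j=e then 3 * n j else 0))"
      by (rule sum.cong) (auto simp: m_def algebra_simps)
    moreover have "\<dots> = n a + n b + 3 * n c + 3 * n e"
      using r by (simp add: sum.distrib)
    ultimately have "(\<Sum>j\<in>{2..d}. m j * n j) = n a + n b + 3 * n c + 3 * n e" by simp
    then show ?thesis by (simp only: cnj_ipow power_add mult.assoc)
  qed
  have "(\<Sum>n\<in>vec_set d. \<i> ^ n a * \<i> ^ n b * cnj (\<i> ^ n c) * cnj (\<i> ^ n e)) =
        (\<Sum>n\<in>vec_set d. \<i> ^ (\<Sum>j\<in>{2..d}. m j * n j))"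
    by (rule sum.cong[OF refl]) (rule pw)
  also have "\<dots> = (if \<forall>j\<in>{2..d}. 4 dvd m j then 4 ^ (d - 1) else 0)" by (rule G[OF d])
  also have "\<dots> = (if (a=c\<and>b=e)\<or>(a=e\<and>b=c) then 4 ^ (d - 1) else 0)"
    using cond4[OF r, of m] by (simp add: m_def)
  finally show ?thesis .
qed



lemma swap4: "(\<Sum>a\<in>A. \<Sum>b\<in>B. \<Sum>l\<in>C. \<Sum>l'\<in>D. f a b l l') = (\<Sum>l\<in>C. \<Sum>l'\<in>D. \<Sum>a\<in>A. \<Sum>b\<in>B. f a b l l')"
proof -
  have "(\<Sum>a\<in>A. \<Sum>b\<in>B. \<Sum>l\<in>C. \<Sum>l'\<in>D. f a b l l') = (\<Sum>a\<in>A. \<Sum>l\<in>C. \<Sum>b\<in>B. \<Sum>l'\<in>D. f a b l l')"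
    by (rule sum.cong[OF refl], rule sum.swap)
  also have "\<dots> = (\<Sum>a\<in>A. \<Sum>l\<in>C. \<Sum>l'\<in>D. \<Sum>b\<in>B. f a b l l')"
    by (rule sum.cong[OF refl], rule sum.cong[OF refl], rule sum.swap)
  also have "\<dots> = (\<Sum>l\<in>C. \<Sum>a\<in>A. \<Sum>l'\<in>D. \<Sum>b\<in>B. f a b l l')"
    by (rule sum.swap)
  also have "\<dots> = (\<Sum>l\<in>C. \<Sum>l'\<in>D. \<Sum>a\<in>A. \<Sum>b\<in>B. f a b l l')"
    by (rule sum.cong[OF refl], rule sum.swap)
  finally show ?thesis .
qed

lemma swap3: "(\<Sum>a\<in>A. \<Sum>b\<in>B. \<Sum>l\<in>C. f a b l) = (\<Sum>b\<in>B. \<Sum>l\<in>C. \<Sum>a\<in>A. f a b l)"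
proof -
  have "(\<Sum>a\<in>A. \<Sum>b\<in>B. \<Sum>l\<in>C. f a b l) = (\<Sum>b\<in>B. \<Sum>a\<in>A. \<Sum>l\<in>C. f a b l)"
    by (rule sum.swap)
  also have "\<dots> = (\<Sum>b\<in>B. \<Sum>l\<in>C. \<Sum>a\<in>A. f a b l)"
    by (rule sum.cong[OF refl], rule sum.swap)
  finally show ?thesis .
qed

lemma s2: "complex_of_real (1 / sqrt 2) * complex_of_real (1 / sqrt 2) = 1/2"
proof -
  have "(1 / sqrt 2) * (1 / sqrt 2) = (1/2::real)" by (simp add: field_simps)
  then show ?thesis by (metis of_real_mult of_real_divide of_real_1 of_real_numeral)
qed

lemma sym_eval: "sym_state l' k' a b = (if l' = k' then (if a = l' \<and> b = l' then 1 else 0)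
   else (if (a = l' \<and> b = k') \<or> (a = k' \<and> b = l') then complex_of_real (1 / sqrt 2) else 0))"
  by (simp add: sym_state_def)

lemma dsum: "x \<in> A \<Longrightarrow> y \<in> B \<Longrightarrow> finite A \<Longrightarrow> finite B \<Longrightarrow>
   (\<Sum>a\<in>A. \<Sum>b\<in>B. (if a = x \<and> b = y then 1 else 0) * f a b) = (f x y :: complex)"
proof -
  assume h: "x \<in> A" "y \<in> B" "finite A" "finite B"
  have "(\<Sum>a\<in>A. \<Sum>b\<in>B. (if a = x \<and> b = y then 1 else 0) * f a b) = (\<Sum>a\<in>A. if a = x then (\<Sum>b\<in>B. (if b = y then f a b else 0)) else 0)"
    by (auto intro!: sum.cong)
  also have "\<dots> = f x y" using h by simp
  finally show ?thesis .
qed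

lemma SS:
  assumes "l \<in> {1..d}" "k \<in> {1..d}"
  shows "(\<Sum>a\<in>{1..d}. \<Sum>b\<in>{1..d}. sym_state l k a b * cnj (sym_state l' k' a b)) =
     (if (l=l'\<and>k=k')\<or>(l=k'\<and>k=l') then 1 else 0)"
proof (cases "l = k")
  case True
  have "(\<Sum>a\<in>{1..d}. \<Sum>b\<in>{1..d}. sym_state l k a b * cnj (sym_state l' k' a b)) =
        (\<Sum>a\<in>{1..d}. \<Sum>b\<in>{1..d}. (if a = l \<and> b = l then 1 else 0) * cnj (sym_state l' k' a b))"
    using True by (simp add: sym_state_def)
  also have "\<dots> = cnj (sym_state l' k' l l)" using assms by (simp add: dsum)
  also have "\<dots> = (if (l=l'\<and>k=k')\<or>(l=k'\<and>k=l') then 1 else 0)"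
    using True by (auto simp: sym_state_def)
  finally show ?thesis .
next
  case False
  let ?s = "complex_of_real (1 / sqrt 2)"
  have "(\<Sum>a\<in>{1..d}. \<Sum>b\<in>{1..d}. sym_state l k a b * cnj (sym_state l' k' a b)) =
        (\<Sum>a\<in>{1..d}. \<Sum>b\<in>{1..d}. (if a = l \<and> b = k then 1 else 0) * (?s * cnj (sym_state l' k' a b))
            + (if a = k \<and> b = l then 1 else 0) * (?s * cnj (sym_state l' k' a b)))"
    using False by (intro sum.cong refl) (auto simp: sym_state_def)
  also have "\<dots> = ?s * cnj (sym_state l' k' l k) + ?s * cnj (sym_state l' k' k l)"
  proof -
    have e1: "(\<Sum>a\<in>{1..d}. \<Sum>b\<in>{1..d}. (if a = l \<and> b = k then 1 else 0) * (?s * cnj (sym_state l' k' a b))) = ?s * cnj (sym_state l' k' l k)"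
      by (rule dsum) (use assms in auto)
    have e2: "(\<Sum>a\<in>{1..d}. \<Sum>b\<in>{1..d}. (if a = k \<and> b = l then 1 else 0) * (?s * cnj (sym_state l' k' a b))) = ?s * cnj (sym_state l' k' k l)"
      by (rule dsum) (use assms in auto)
    show ?thesis by (simp only: sum.distrib e1 e2)
  qed
  also have "\<dots> = (if (l=l'\<and>k=k')\<or>(l=k'\<and>k=l') then 1 else 0)"
    using False s2 by (auto simp: sym_state_def)
  finally show ?thesis .
qed



lemma Ccoef:
  assumes r: "l \<in> {1..d}" "k \<in> {1..d}"
  shows "(\<Sum>a\<in>{1..d}. \<Sum>b\<in>{1..d}. cloner_iso d (a, b, k) l * cnj (cloner_iso d (a, b, k') l')) =
     (if (l=l'\<and>k=k')\<or>(l=k'\<and>k=l') then complex_of_real ((1 + (if l = k then 1 else 0)) / (real d + 1)) else 0)"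
proof -
  define x where "x = sqrt ((1 + (if l = k then 1 else 0)) / (real d + 1))"
  define y where "y = sqrt ((1 + (if l' = k' then 1 else 0)) / (real d + 1))"
  have "(\<Sum>a\<in>{1..d}. \<Sum>b\<in>{1..d}. cloner_iso d (a, b, k) l * cnj (cloner_iso d (a, b, k') l')) =
        (\<Sum>a\<in>{1..d}. \<Sum>b\<in>{1..d}. complex_of_real (x * y) * (sym_state l k a b * cnj (sym_state l' k' a b)))"
    by (intro sum.cong refl) (simp add: cloner_iso_def x_def y_def)
  also have "\<dots> = complex_of_real (x * y) * (\<Sum>a\<in>{1..d}. \<Sum>b\<in>{1..d}. sym_state l k a b * cnj (sym_state l' k' a b))"
    by (simp add: sum_distrib_left)
  also have "\<dots> = complex_of_real (x * y) * (if (l=l'\<and>k=k')\<or>(l=k'\<and>k=l') then 1 else 0)"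
    by (simp only: SS[OF r])
  also have "\<dots> = (if (l=l'\<and>k=k')\<or>(l=k'\<and>k=l') then complex_of_real ((1 + (if l = k then 1 else 0)) / (real d + 1)) else 0)"
  proof (cases "(l=l'\<and>k=k')\<or>(l=k'\<and>k=l')")
    case True
    then have "y = x" unfolding x_def y_def by auto
    moreover have "x * x = (1 + (if l = k then 1 else 0)) / (real d + 1)"
      unfolding x_def by (simp add: divide_nonneg_nonneg)
    ultimately have xy: "complex_of_real (x * y) = complex_of_real ((1 + (if l = k then 1 else 0)) / (real d + 1))" by simp
    note c = True
    show ?thesis by (simp only: c if_True mult_1_right xy)
  next
    case False
    note c = False
    show ?thesis by (simp only: c if_False) simp
  qed
  finally show ?thesis .
qed

lemma compl_closed:
  assumes k: "k \<in> {1..d}" "k' \<in> {1..d}"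
  shows "compl_S2 d \<rho> k k' = (if k = k' then (\<Sum>l\<in>{1..d}. \<rho> l l) + \<rho> k k else \<rho> k' k) / (of_nat d + 1)"
proof -
  have "compl_S2 d \<rho> k k' = (\<Sum>l\<in>{1..d}. \<Sum>l'\<in>{1..d}. \<Sum>a\<in>{1..d}. \<Sum>b\<in>{1..d}.
           \<rho> l l' * (cloner_iso d (a, b, k) l * cnj (cloner_iso d (a, b, k') l')))"
    unfolding compl_S2_def by (subst swap4, (rule sum.cong[OF refl])+, simp only: mult_ac)
  also have "\<dots> = (\<Sum>l\<in>{1..d}. \<Sum>l'\<in>{1..d}. \<rho> l l' *
      (if (l=l'\<and>k=k')\<or>(l=k'\<and>k=l') then complex_of_real ((1 + (if l = k then 1 else 0)) / (real d + 1)) else 0))"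
  proof (rule sum.cong[OF refl], rule sum.cong[OF refl])
    fix l l' assume l: "l \<in> {1..d}" "l' \<in> {1..d}"
    have "(\<Sum>a\<in>{1..d}. \<Sum>b\<in>{1..d}. \<rho> l l' * (cloner_iso d (a, b, k) l * cnj (cloner_iso d (a, b, k') l')))
      = \<rho> l l' * (\<Sum>a\<in>{1..d}. \<Sum>b\<in>{1..d}. cloner_iso d (a, b, k) l * cnj (cloner_iso d (a, b, k') l'))"
      by (simp only: sum_distrib_left)
    also have "\<dots> = \<rho> l l' * (if (l=l'\<and>k=k')\<or>(l=k'\<and>k=l') then complex_of_real ((1 + (if l = k then 1 else 0)) / (real d + 1)) else 0)"
      by (simp only: Ccoef[OF l(1) k(1)])
    finally show "(\<Sum>a\<in>{1..d}. \<Sum>b\<in>{1..d}. \<rho> l l' * (cloner_iso d (a, b, k) l * cnj (cloner_iso d (a, b, k') l')))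
      = \<rho> l l' * (if (l=l'\<and>k=k')\<or>(l=k'\<and>k=l') then complex_of_real ((1 + (if l = k then 1 else 0)) / (real d + 1)) else 0)" .
  qed
  also have "\<dots> = (if k = k' then (\<Sum>l\<in>{1..d}. \<rho> l l) + \<rho> k k else \<rho> k' k) / (of_nat d + 1)"
  proof (cases "k = k'")
    case True
    have "(\<Sum>l\<in>{1..d}. \<Sum>l'\<in>{1..d}. \<rho> l l' *
      (if (l=l'\<and>k=k')\<or>(l=k'\<and>k=l') then complex_of_real ((1 + (if l = k then 1 else 0)) / (real d + 1)) else 0))
      = (\<Sum>l\<in>{1..d}. \<rho> l l * complex_of_real ((1 + (if l = k then 1 else 0)) / (real d + 1)))"
    proof (rule sum.cong[OF refl])
      fix l assume "l \<in> {1..d}"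
      have "(\<Sum>l'\<in>{1..d}. \<rho> l l' *
      (if (l=l'\<and>k=k')\<or>(l=k'\<and>k=l') then complex_of_real ((1 + (if l = k then 1 else 0)) / (real d + 1)) else 0))
        = (\<Sum>l'\<in>{1..d}. if l' = l then \<rho> l l' * complex_of_real ((1 + (if l = k then 1 else 0)) / (real d + 1)) else 0)"
        using True by (intro sum.cong refl) auto
      then show "(\<Sum>l'\<in>{1..d}. \<rho> l l' *
      (if (l=l'\<and>k=k')\<or>(l=k'\<and>k=l') then complex_of_real ((1 + (if l = k then 1 else 0)) / (real d + 1)) else 0))
        = \<rho> l l * complex_of_real ((1 + (if l = k then 1 else 0)) / (real d + 1))"
        using \<open>l \<in> {1..d}\<close> by simp
    qed
    also have "\<dots> = (\<Sum>l\<in>{1..d}. \<rho> l l / (of_nat d + 1) + (if l = k then \<rho> l l / (of_nat d + 1) else 0))"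
    proof (intro sum.cong refl)
      fix l
      have cf: "complex_of_real ((1 + (if l = k then 1 else 0)) / (real d + 1)) = (1 + (if l = k then 1 else 0)) / (of_nat d + 1)"
        by (simp add: of_real_divide)
      show "\<rho> l l * complex_of_real ((1 + (if l = k then 1 else 0)) / (real d + 1)) = \<rho> l l / (of_nat d + 1) + (if l = k then \<rho> l l / (of_nat d + 1) else 0)"
        unfolding cf by (cases "l = k") (simp_all add: add_divide_distrib distrib_left)
    qed
    also have "\<dots> = ((\<Sum>l\<in>{1..d}. \<rho> l l) + \<rho> k k) / (of_nat d + 1)"
      using k by (simp add: sum.distrib sum_divide_distrib add_divide_distrib)
    finally show ?thesis using True by simp
  next
    case False
    have "(\<Sum>l\<in>{1..d}. \<Sum>l'\<in>{1..d}. \<rho> l l' *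
      (if (l=l'\<and>k=k')\<or>(l=k'\<and>k=l') then complex_of_real ((1 + (if l = k then 1 else 0)) / (real d + 1)) else 0))
      = (\<Sum>l\<in>{1..d}. \<Sum>l'\<in>{1..d}. if l = k' then (if l' = k then \<rho> k' k / (of_nat d + 1) else 0) else 0)"
    proof (intro sum.cong refl)
      fix l l' assume "l' \<in> {1..d}"
      show "\<rho> l l' * (if (l=l'\<and>k=k')\<or>(l=k'\<and>k=l') then complex_of_real ((1 + (if l = k then 1 else 0)) / (real d + 1)) else 0)
          = (if l = k' then (if l' = k then \<rho> k' k / (of_nat d + 1) else 0) else 0)"
        using False by (auto simp: of_real_divide)
    qed
    also have "\<dots> = (\<Sum>l\<in>{1..d}. if l = k' then (\<Sum>l'\<in>{1..d}. if l' = k then \<rho> k' k / (of_nat d + 1) else 0) else 0)"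
      by (intro sum.cong refl) auto
    also have "\<dots> = \<rho> k' k / (of_nat d + 1)" using k by simp
    finally show ?thesis using False by simp
  qed
  finally show ?thesis .
qed



lemma inv_sqrt_sq: "0 < (A::real) \<Longrightarrow> (1 / sqrt A) * (1 / sqrt A) = 1 / A"
proof -
  assume A: "0 < A"
  have "(1 / sqrt A) * (1 / sqrt A) = 1 / (sqrt A * sqrt A)" by simp
  also have "sqrt A * sqrt A = A" using A by simp
  finally show ?thesis .
qed

lemma c1sq: "complex_of_real (1 / sqrt (real d + 1)) * cnj (complex_of_real (1 / sqrt (real d + 1))) = 1 / (of_nat d + 1)"
proof -
  have "complex_of_real (1 / sqrt (real d + 1)) * cnj (complex_of_real (1 / sqrt (real d + 1)))
      = complex_of_real ((1 / sqrt (real d + 1)) * (1 / sqrt (real d + 1)))"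
    by (simp only: complex_cnj_complex_of_real of_real_mult)
  also have "(1 / sqrt (real d + 1)) * (1 / sqrt (real d + 1)) = 1 / (real d + 1)"
    by (rule inv_sqrt_sq) simp
  also have "complex_of_real (1 / (real d + 1)) = 1 / (of_nat d + 1)"
    by (simp add: of_real_divide)
  finally show ?thesis .
qed

lemma cvsq: "complex_of_real (1 / sqrt (4 ^ (d - 1) * (real d + 1))) * cnj (complex_of_real (1 / sqrt (4 ^ (d - 1) * (real d + 1)))) * 4 ^ (d - 1) = 1 / (of_nat d + 1)"
proof -
  have "complex_of_real (1 / sqrt (4 ^ (d - 1) * (real d + 1))) * cnj (complex_of_real (1 / sqrt (4 ^ (d - 1) * (real d + 1)))) * 4 ^ (d - 1)
      = complex_of_real ((1 / sqrt (4 ^ (d - 1) * (real d + 1))) * (1 / sqrt (4 ^ (d - 1) * (real d + 1))) * 4 ^ (d - 1))"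
    by (simp only: complex_cnj_complex_of_real of_real_mult of_real_power of_real_numeral)
  also have "(1 / sqrt (4 ^ (d - 1) * (real d + 1))) * (1 / sqrt (4 ^ (d - 1) * (real d + 1))) = 1 / (4 ^ (d - 1) * (real d + 1))"
    by (rule inv_sqrt_sq) simp
  also have "1 / (4 ^ (d - 1) * (real d + 1)) * 4 ^ (d - 1) = 1 / (real d + 1)"
    by simp
  also have "complex_of_real (1 / (real d + 1)) = 1 / (of_nat d + 1)"
    by (simp add: of_real_divide)
  finally show ?thesis .
qed

lemma kd1: "j \<in> {1..d} \<Longrightarrow> mmult d (kraus_diag d j) \<rho> k x = (if k = j then complex_of_real (1 / sqrt (real d + 1)) * \<rho> j x else 0)"
proof -
  assume j: "j \<in> {1..d}"
  have "mmult d (kraus_diag d j) \<rho> k x = (\<Sum>y\<in>{1..d}. if y = j then (if k = j then complex_of_real (1 / sqrt (real d + 1)) * \<rho> j x else 0) else 0)"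
    unfolding mmult_def kraus_diag_def by (rule sum.cong) auto
  also have "\<dots> = (if k = j then complex_of_real (1 / sqrt (real d + 1)) * \<rho> j x else 0)"
    using j by simp
  finally show ?thesis .
qed

lemma diag_ch:
  assumes k: "k \<in> {1..d}" "k' \<in> {1..d}"
  shows "(\<Sum>j\<in>{1..d}. mmult d (mmult d (kraus_diag d j) \<rho>) (adj (kraus_diag d j)) k k') = (if k = k' then \<rho> k k else 0) / (of_nat d + 1)"
proof -
  let ?c = "complex_of_real (1 / sqrt (real d + 1))"
  have "(\<Sum>j\<in>{1..d}. mmult d (mmult d (kraus_diag d j) \<rho>) (adj (kraus_diag d j)) k k')
      = (\<Sum>j\<in>{1..d}. if j = k then (if k' = k then ?c * cnj ?c * \<rho> k k else 0) else 0)"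
  proof (rule sum.cong[OF refl])
    fix j assume j: "j \<in> {1..d}"
    have "mmult d (mmult d (kraus_diag d j) \<rho>) (adj (kraus_diag d j)) k k'
       = (\<Sum>x\<in>{1..d}. (if k = j then ?c * \<rho> j x else 0) * cnj (kraus_diag d j k' x))"
      unfolding mmult_def[of d "mmult d (kraus_diag d j) \<rho>"] adj_def using kd1[OF j] by simp
    also have "\<dots> = (\<Sum>x\<in>{1..d}. if x = j then (if k = j \<and> k' = j then ?c * \<rho> j x * cnj ?c else 0) else 0)"
      by (rule sum.cong[OF refl]) (auto simp: kraus_diag_def)
    also have "\<dots> = (if j = k then (if k' = k then ?c * cnj ?c * \<rho> k k else 0) else 0)"
      using j by (auto simp: mult_ac)
    finally show "mmult d (mmult d (kraus_diag d j) \<rho>) (adj (kraus_diag d j)) k k' = (if j = k then (if k' = k then ?c * cnj ?c * \<rho> k k else 0) else 0)" .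
  qed
  also have "\<dots> = (if k' = k then ?c * cnj ?c * \<rho> k k else 0)" using k by simp
  also have "\<dots> = (if k = k' then \<rho> k k else 0) / (of_nat d + 1)"
    by (simp only: c1sq) simp
  finally show ?thesis .
qed

lemma diag_id:
  assumes k: "k \<in> {1..d}" "k' \<in> {1..d}"
  shows "(\<Sum>j\<in>{1..d}. mmult d (adj (kraus_diag d j)) (kraus_diag d j) k k') = (if k = k' then 1 else 0) / (of_nat d + 1)"
proof -
  let ?c = "complex_of_real (1 / sqrt (real d + 1))"
  have "(\<Sum>j\<in>{1..d}. mmult d (adj (kraus_diag d j)) (kraus_diag d j) k k')
      = (\<Sum>j\<in>{1..d}. if j = k then (if k' = k then cnj ?c * ?c else 0) else 0)"
  proof (rule sum.cong[OF refl])
    fix j assume j: "j \<in> {1..d}"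
    have "mmult d (adj (kraus_diag d j)) (kraus_diag d j) k k'
       = (\<Sum>x\<in>{1..d}. if x = j then (if k = j \<and> k' = j then cnj ?c * ?c else 0) else 0)"
      unfolding mmult_def adj_def by (rule sum.cong[OF refl]) (auto simp: kraus_diag_def)
    also have "\<dots> = (if j = k then (if k' = k then cnj ?c * ?c else 0) else 0)"
      using j by auto
    finally show "mmult d (adj (kraus_diag d j)) (kraus_diag d j) k k' = (if j = k then (if k' = k then cnj ?c * ?c else 0) else 0)" .
  qed
  also have "\<dots> = (if k' = k then cnj ?c * ?c else 0)" using k by simp
  also have "\<dots> = (if k = k' then 1 else 0) / (of_nat d + 1)"
  proof -
    have e: "cnj ?c * ?c = 1 / (of_nat d + 1)" using c1sq[of d] by (simp only: mult.commute)
    show ?thesis by (simp only: e) simp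
  qed
  finally show ?thesis .
qed



lemma kv: "b \<in> {1..d} \<Longrightarrow> kraus_vec d n a b = complex_of_real (1 / sqrt (4 ^ (d - 1) * (real d + 1))) * \<i> ^ n a * \<i> ^ n b"
proof -
  assume b: "b \<in> {1..d}"
  let ?c = "complex_of_real (1 / sqrt (4 ^ (d - 1) * (real d + 1)))"
  have "kraus_vec d n a b = (\<Sum>j\<in>{1..d}. if j = b then ?c * \<i> ^ n a * (cnj (\<i> ^ n b) * (-1) ^ n b) else 0)"
    unfolding kraus_vec_def mmult_def psi_def sigma_z_def by (rule sum.cong) auto
  also have "\<dots> = ?c * \<i> ^ n a * (cnj (\<i> ^ n b) * (-1) ^ n b)" using b by simp
  also have "cnj (\<i> ^ n b) * (-1) ^ n b = \<i> ^ n b"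
  proof -
    have "cnj (\<i> ^ n b) * (-1) ^ n b = ((- \<i>) * (-1)) ^ n b" by (simp only: power_mult_distrib complex_cnj_power complex_cnj_i)
    also have "(- \<i>) * (-1) = \<i>" by simp
    finally show ?thesis .
  qed
  finally show ?thesis .
qed

lemma EVAL:
  fixes \<rho> :: "nat \<Rightarrow> nat \<Rightarrow> complex" and z :: complex
  assumes k: "k \<in> {1..d}" "k' \<in> {1..d}"
  shows "(\<Sum>j\<in>{1..d}. \<Sum>l\<in>{1..d}. \<rho> l j * (if (k=k'\<and>l=j)\<or>(k=j\<and>l=k') then z else 0)) =
         z * (if k = k' then (\<Sum>l\<in>{1..d}. \<rho> l l) else \<rho> k' k)"
proof (cases "k = k'")
  case True
  have "(\<Sum>j\<in>{1..d}. \<Sum>l\<in>{1..d}. \<rho> l j * (if (k=k'\<and>l=j)\<or>(k=j\<and>l=k') then z else 0))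
      = (\<Sum>j\<in>{1..d}. \<Sum>l\<in>{1..d}. if l = j then z * \<rho> j j else 0)"
    using True by (intro sum.cong refl) (auto simp: mult.commute)
  also have "\<dots> = (\<Sum>j\<in>{1..d}. z * \<rho> j j)" by simp
  also have "\<dots> = z * (\<Sum>l\<in>{1..d}. \<rho> l l)" by (simp add: sum_distrib_left)
  finally show ?thesis using True by simp
next
  case False
  have "(\<Sum>j\<in>{1..d}. \<Sum>l\<in>{1..d}. \<rho> l j * (if (k=k'\<and>l=j)\<or>(k=j\<and>l=k') then z else 0))
      = (\<Sum>j\<in>{1..d}. if j = k then (\<Sum>l\<in>{1..d}. if l = k' then z * \<rho> k' k else 0) else 0)"
  proof (rule sum.cong[OF refl])
    fix j
    show "(\<Sum>l\<in>{1..d}. \<rho> l j * (if (k=k'\<and>l=j)\<or>(k=j\<and>l=k') then z else 0))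
      = (if j = k then (\<Sum>l\<in>{1..d}. if l = k' then z * \<rho> k' k else 0) else 0)"
    proof (cases "j = k")
      case True
      have "(\<Sum>l\<in>{1..d}. \<rho> l j * (if (k=k'\<and>l=j)\<or>(k=j\<and>l=k') then z else 0))
        = (\<Sum>l\<in>{1..d}. if l = k' then z * \<rho> k' k else 0)"
        using True False by (intro sum.cong refl) (auto simp: mult.commute)
      then show ?thesis using True by (simp only: if_True refl)
    next
      case c: False
      then show ?thesis using False by (auto intro!: sum.neutral)
    qed
  qed
  also have "\<dots> = z * \<rho> k' k" using k by simp
  finally show ?thesis using False by simp
qed

lemma vec_ch:
  assumes d: "d \<ge> 1" and k: "k \<in> {1..d}" "k' \<in> {1..d}"
  shows "(\<Sum>n\<in>vec_set d. mmult d (mmult d (kraus_vec d n) \<rho>) (adj (kraus_vec d n)) k k') =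
         (if k = k' then (\<Sum>l\<in>{1..d}. \<rho> l l) else \<rho> k' k) / (of_nat d + 1)"
proof -
  let ?c = "complex_of_real (1 / sqrt (4 ^ (d - 1) * (real d + 1)))"
  let ?C = "?c * cnj ?c"
  have "(\<Sum>n\<in>vec_set d. mmult d (mmult d (kraus_vec d n) \<rho>) (adj (kraus_vec d n)) k k')
     = (\<Sum>n\<in>vec_set d. \<Sum>j\<in>{1..d}. \<Sum>l\<in>{1..d}. ?C * \<rho> l j * (\<i> ^ n k * \<i> ^ n l * cnj (\<i> ^ n k') * cnj (\<i> ^ n j)))"
  proof (rule sum.cong[OF refl])
    fix n
    show "mmult d (mmult d (kraus_vec d n) \<rho>) (adj (kraus_vec d n)) k k'
      = (\<Sum>j\<in>{1..d}. \<Sum>l\<in>{1..d}. ?C * \<rho> l j * (\<i> ^ n k * \<i> ^ n l * cnj (\<i> ^ n k') * cnj (\<i> ^ n j)))"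
      unfolding mmult_def[of d "mmult d (kraus_vec d n) \<rho>"] adj_def
    proof (rule sum.cong[OF refl])
      fix j assume j: "j \<in> {1..d}"
      have "mmult d (kraus_vec d n) \<rho> k j * cnj (kraus_vec d n k' j)
          = (\<Sum>l\<in>{1..d}. kraus_vec d n k l * \<rho> l j) * cnj (kraus_vec d n k' j)"
        by (simp only: mmult_def)
      also have "\<dots> = (\<Sum>l\<in>{1..d}. kraus_vec d n k l * \<rho> l j * cnj (kraus_vec d n k' j))"
        by (simp only: sum_distrib_right)
      also have "\<dots> = (\<Sum>l\<in>{1..d}. ?C * \<rho> l j * (\<i> ^ n k * \<i> ^ n l * cnj (\<i> ^ n k') * cnj (\<i> ^ n j)))"
      proof (rule sum.cong[OF refl])
        fix l assume l: "l \<in> {1..d}"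
        show "kraus_vec d n k l * \<rho> l j * cnj (kraus_vec d n k' j) = ?C * \<rho> l j * (\<i> ^ n k * \<i> ^ n l * cnj (\<i> ^ n k') * cnj (\<i> ^ n j))"
          by (simp only: kv[OF l] kv[OF j] complex_cnj_mult mult_ac)
      qed
      finally show "mmult d (kraus_vec d n) \<rho> k j * cnj (kraus_vec d n k' j)
          = (\<Sum>l\<in>{1..d}. ?C * \<rho> l j * (\<i> ^ n k * \<i> ^ n l * cnj (\<i> ^ n k') * cnj (\<i> ^ n j)))" .
    qed
  qed
  also have "\<dots> = (\<Sum>j\<in>{1..d}. \<Sum>l\<in>{1..d}. \<Sum>n\<in>vec_set d. ?C * \<rho> l j * (\<i> ^ n k * \<i> ^ n l * cnj (\<i> ^ n k') * cnj (\<i> ^ n j)))"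
    by (rule swap3)
  also have "\<dots> = (\<Sum>j\<in>{1..d}. \<Sum>l\<in>{1..d}. \<rho> l j * (if (k=k'\<and>l=j)\<or>(k=j\<and>l=k') then 1 / (of_nat d + 1) else 0))"
  proof (rule sum.cong[OF refl], rule sum.cong[OF refl])
    fix j l assume j: "j \<in> {1..d}" and l: "l \<in> {1..d}"
    have "(\<Sum>n\<in>vec_set d. ?C * \<rho> l j * (\<i> ^ n k * \<i> ^ n l * cnj (\<i> ^ n k') * cnj (\<i> ^ n j)))
       = ?C * \<rho> l j * (\<Sum>n\<in>vec_set d. \<i> ^ n k * \<i> ^ n l * cnj (\<i> ^ n k') * cnj (\<i> ^ n j))"
      by (simp only: sum_distrib_left)
    also have "\<dots> = ?C * \<rho> l j * (if (k=k'\<and>l=j)\<or>(k=j\<and>l=k') then 4 ^ (d - 1) else 0)"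
      by (simp only: CH[OF d k(1) l k(2) j])
    also have "\<dots> = \<rho> l j * (if (k=k'\<and>l=j)\<or>(k=j\<and>l=k') then 1 / (of_nat d + 1) else 0)"
    proof (cases "(k=k'\<and>l=j)\<or>(k=j\<and>l=k')")
      case True
      note c = True
      have "?C * \<rho> l j * 4 ^ (d - 1) = \<rho> l j * (?C * 4 ^ (d - 1))" by (simp only: mult_ac)
      also have "?C * 4 ^ (d - 1) = 1 / (of_nat d + 1)" by (rule cvsq)
      finally show ?thesis by (simp only: c if_True)
    next
      case False
      note c = False
      show ?thesis by (simp only: c if_False mult_zero_right)
    qed
    finally show "(\<Sum>n\<in>vec_set d. ?C * \<rho> l j * (\<i> ^ n k * \<i> ^ n l * cnj (\<i> ^ n k') * cnj (\<i> ^ n j)))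
       = \<rho> l j * (if (k=k'\<and>l=j)\<or>(k=j\<and>l=k') then 1 / (of_nat d + 1) else 0)" .
  qed
  also have "\<dots> = 1 / (of_nat d + 1) * (if k = k' then (\<Sum>l\<in>{1..d}. \<rho> l l) else \<rho> k' k)"
    by (rule EVAL[OF k])
  also have "\<dots> = (if k = k' then (\<Sum>l\<in>{1..d}. \<rho> l l) else \<rho> k' k) / (of_nat d + 1)"
    by simp
  finally show ?thesis .
qed

lemma vec_id:
  assumes d: "d \<ge> 1" and k: "k \<in> {1..d}" "k' \<in> {1..d}"
  shows "(\<Sum>n\<in>vec_set d. mmult d (adj (kraus_vec d n)) (kraus_vec d n) k k') =
         (if k = k' then of_nat d / (of_nat d + 1) else 0)"
proof -
  let ?c = "complex_of_real (1 / sqrt (4 ^ (d - 1) * (real d + 1)))"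
  let ?C = "?c * cnj ?c"
  have "(\<Sum>n\<in>vec_set d. mmult d (adj (kraus_vec d n)) (kraus_vec d n) k k')
     = (\<Sum>n\<in>vec_set d. \<Sum>j\<in>{1..d}. ?C * (\<i> ^ n j * \<i> ^ n k' * cnj (\<i> ^ n j) * cnj (\<i> ^ n k)))"
  proof (rule sum.cong[OF refl])
    fix n
    show "mmult d (adj (kraus_vec d n)) (kraus_vec d n) k k'
      = (\<Sum>j\<in>{1..d}. ?C * (\<i> ^ n j * \<i> ^ n k' * cnj (\<i> ^ n j) * cnj (\<i> ^ n k)))"
      unfolding mmult_def adj_def
    proof (rule sum.cong[OF refl])
      fix j assume j: "j \<in> {1..d}"
      show "cnj (kraus_vec d n j k) * kraus_vec d n j k' = ?C * (\<i> ^ n j * \<i> ^ n k' * cnj (\<i> ^ n j) * cnj (\<i> ^ n k))"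
        by (simp only: kv[OF k(1)] kv[OF k(2)] complex_cnj_mult mult_ac)
    qed
  qed
  also have "\<dots> = (\<Sum>j\<in>{1..d}. \<Sum>n\<in>vec_set d. ?C * (\<i> ^ n j * \<i> ^ n k' * cnj (\<i> ^ n j) * cnj (\<i> ^ n k)))"
    by (rule sum.swap)
  also have "\<dots> = (\<Sum>j\<in>{1..d}. if k = k' then 1 / (of_nat d + 1) else 0)"
  proof (rule sum.cong[OF refl])
    fix j assume j: "j \<in> {1..d}"
    have "(\<Sum>n\<in>vec_set d. ?C * (\<i> ^ n j * \<i> ^ n k' * cnj (\<i> ^ n j) * cnj (\<i> ^ n k)))
       = ?C * (if (j=j\<and>k'=k)\<or>(j=k\<and>k'=j) then 4 ^ (d - 1) else 0)"
      by (simp only: sum_distrib_left[symmetric] CH[OF d j k(2) j k(1)])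
    also have "\<dots> = (if k = k' then 1 / (of_nat d + 1) else 0)"
    proof (cases "k = k'")
      case True
      then have c: "(j=j\<and>k'=k)\<or>(j=k\<and>k'=j)" by simp
      have e: "?C * 4 ^ (d - 1) = 1 / (of_nat d + 1)" by (rule cvsq)
      have t: "(k = k') = True" using True by simp
      show ?thesis by (simp only: c t if_True e)
    next
      case False
      then have c: "\<not> ((j=j\<and>k'=k)\<or>(j=k\<and>k'=j))" by auto
      show ?thesis using False by (simp only: c if_False mult_zero_right)
    qed
    finally show "(\<Sum>n\<in>vec_set d. ?C * (\<i> ^ n j * \<i> ^ n k' * cnj (\<i> ^ n j) * cnj (\<i> ^ n k)))
       = (if k = k' then 1 / (of_nat d + 1) else 0)" .
  qed
  also have "\<dots> = (if k = k' then of_nat d / (of_nat d + 1) else 0)"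
    by simp
  finally show ?thesis .
qed


theorem lemma2:
  fixes d :: nat
  assumes "d \<ge> 2"
  shows "(\<forall>\<rho>. \<forall>k\<in>{1..d}. \<forall>k'\<in>{1..d}.
            compl_S2 d \<rho> k k' =
              (\<Sum>j\<in>{1..d}. mmult d (mmult d (kraus_diag d j) \<rho>) (adj (kraus_diag d j)) k k')
            + (\<Sum>n\<in>vec_set d. mmult d (mmult d (kraus_vec d n) \<rho>) (adj (kraus_vec d n)) k k'))
       \<and> (\<forall>k\<in>{1..d}. \<forall>k'\<in>{1..d}.
            (\<Sum>j\<in>{1..d}. mmult d (adj (kraus_diag d j)) (kraus_diag d j) k k')
            + (\<Sum>n\<in>vec_set d. mmult d (adj (kraus_vec d n)) (kraus_vec d n) k k')
            = idm k k')"
  proof -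
  have d1: "d \<ge> 1" using assms by simp
  have e1: "(of_nat d + 1 :: complex) = of_nat (Suc d)" by simp
  have nz: "(of_nat d + 1 :: complex) \<noteq> 0" unfolding e1 by (rule of_nat_neq_0)
  show ?thesis
  proof (intro conjI allI ballI)
    fix \<rho> k k' assume k: "k \<in> {1..d}" "k' \<in> {1..d}"
    show "compl_S2 d \<rho> k k' =
              (\<Sum>j\<in>{1..d}. mmult d (mmult d (kraus_diag d j) \<rho>) (adj (kraus_diag d j)) k k')
            + (\<Sum>n\<in>vec_set d. mmult d (mmult d (kraus_vec d n) \<rho>) (adj (kraus_vec d n)) k k')"
      unfolding compl_closed[OF k] diag_ch[OF k] vec_ch[OF d1 k]
      by (cases "k = k'") (simp_all add: add_divide_distrib add.commute)
  next
    fix k k' assume k: "k \<in> {1..d}" "k' \<in> {1..d}"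
    show "(\<Sum>j\<in>{1..d}. mmult d (adj (kraus_diag d j)) (kraus_diag d j) k k')
            + (\<Sum>n\<in>vec_set d. mmult d (adj (kraus_vec d n)) (kraus_vec d n) k k')
            = idm k k'"
      unfolding diag_id[OF k] vec_id[OF d1 k] idm_def
    proof (cases "k = k'")
      case True
      have "1 / (of_nat d + 1) + of_nat d / (of_nat d + 1) = (1::complex)"
        using nz by (simp add: add_divide_distrib[symmetric])
      then show "(if k = k' then 1 else 0) / (of_nat d + 1) + (if k = k' then of_nat d / (of_nat d + 1) else 0) = (if k = k' then 1 else (0::complex))"
        using True by simp
    qed simp
  qed
qed

end
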